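(* Let $\mathcal H$ be a well-structured preconditioner set, $\alpha\in(0,1)$, $\eta>0$, $T\in\mathbb N$. Let $f:\mathbb R^d\to\mathbb R$ be differentiable, bounded below, with $L_{\|\cdot\|_{\mathcal H}}(f)<\infty$, and $\Delta_0=f(x_0)-\inf f$. Let $f_0,\dots,f_{T-1}$ be mutually independent random differentiable functions with $\mathbb E[\nabla f_t(x)]=\nabla f(x)$ for all $t,x$, and with adaptive gradient variance $\sigma_{\mathcal H}(\{f_t\}_{t=0}^{T-1})\le\sigma_{\mathcal H}$. Let $(x_t)$ be generated by normalized steepest descent with momentum under the norm $\|\cdot\|_{\mathcal H}$. Then $$\mathbb E\,\frac1T\sum_{t=0}^{T-1}\|\nabla f(x_t)\|_{\mathcal H,*}\le\frac{\Delta_0}{\eta T}+\frac{2\eta}{\alpha}L_{\|\cdot\|_{\mathcal H}}(f)+\frac{2\sigma_{\mathcal H}}{\alpha T}+2\sigma_{\mathcal H}\sqrt\alpha.$$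
   Context: $\mathcal S^d_+$ (resp. $\mathcal S^d_{++}$) denotes the set of real symmetric positive semidefinite (resp. positive definite) $d\times d$ matrices. A set $\mathcal H\subseteq\mathcal S_+^d$ is a well-structured preconditioner set if $\mathcal H=\mathcal S_+^d\cap\mathcal K$ for some set $\mathcal K$ of real $d\times d$ matrices that is closed under scalar multiplication, matrix addition and matrix multiplication and contains the identity $I_d$. For $H\in\mathcal S_+^d$, $\|x\|_H=\sqrt{x^\top Hx}$; $\|x\|_{\mathcal H}:=\sup_{H\in\mathcal H,\operatorname{Tr}(H)\le1}\|x\|_H$ and $\|y\|_{\mathcal H,*}:=\sup_{\|x\|_{\mathcal H}\le1}\langle x,y\rangle$. For a norm $\|\cdot\|$ with dual $\|\cdot\|_*$, $L_{\|\cdot\|}(f)$ is the smallest $L$ with $\|\nabla f(x)-\nabla f(y)\|_*\le L\|x-y\|$ for all $x,y$. Adaptive gradient variance: $\sigma_{\mathcal H}(\{f_t\})^2:=\inf_{H\in\mathcal H\cap\mathcal S^d_{++},\operatorname{Tr}(H)\le1}\sup_{t,x}\mathbb E\|\nabla f_t(x)-\mathbb E[\nabla f_t(x)]\|_{H^{-1}}^2$. Normalized steepest descent with momentum under a norm $\|\cdot\|$: given $x_0$, set $g_t=\nabla f_t(x_t)$, $m_0=g_0$, $m_t=(1-\alpha)m_{t-1}+\alpha g_t$ for $t\ge1$, $u_t\in\arg\max_{\|u\|\le1}\langle m_t,u\rangle$, $x_{t+1}=x_t-\eta u_t$. *)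

theory Defs
  imports "HOL-Probability.Probability"
begin

definition psd_mat :: "real^'n^'n \<Rightarrow> bool" where
  "psd_mat A \<longleftrightarrow> transpose A = A \<and> (\<forall>x. 0 \<le> x \<bullet> (A *v x))"

definition pd_mat :: "real^'n^'n \<Rightarrow> bool" where
  "pd_mat A \<longleftrightarrow> transpose A = A \<and> (\<forall>x. x \<noteq> 0 \<longrightarrow> 0 < x \<bullet> (A *v x))"

definition well_structured :: "(real^'n^'n) set \<Rightarrow> bool" where
  "well_structured Hs \<longleftrightarrow> (\<exists>K. Hs = {A. psd_mat A} \<inter> K
      \<and> (\<forall>c. \<forall>A\<in>K. c *\<^sub>R A \<in> K)
      \<and> (\<forall>A\<in>K. \<forall>B\<in>K. A + B \<in> K)
      \<and> (\<forall>A\<in>K. \<forall>B\<in>K. A ** B \<in> K)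
      \<and> mat 1 \<in> K)"

definition mnorm :: "real^'n^'n \<Rightarrow> real^'n \<Rightarrow> real" where
  "mnorm H x = sqrt (x \<bullet> (H *v x))"

definition normH :: "(real^'n^'n) set \<Rightarrow> real^'n \<Rightarrow> real" where
  "normH Hs x = Sup {mnorm H x | H. H \<in> Hs \<and> trace H \<le> 1}"

definition dualH :: "(real^'n^'n) set \<Rightarrow> real^'n \<Rightarrow> real" where
  "dualH Hs y = Sup {x \<bullet> y | x. normH Hs x \<le> 1}"

definition lip_set :: "(real^'n^'n) set \<Rightarrow> (real^'n \<Rightarrow> real^'n) \<Rightarrow> real set" where
  "lip_set Hs Df = {L. \<forall>x y. dualH Hs (Df x - Df y) \<le> L * normH Hs (x - y)}"

definition lip_const :: "(real^'n^'n) set \<Rightarrow> (real^'n \<Rightarrow> real^'n) \<Rightarrow> real" where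
  "lip_const Hs Df = Inf (lip_set Hs Df)"

text \<open>Squared adaptive gradient variance \<open>\<sigma>_\<H>({f_t}_{t<T})^2\<close>, where \<open>g t x \<omega>\<close> is the
  stochastic gradient \<open>\<nabla>f_t(x)\<close> at outcome \<omega>; the norm is \<open>\<parallel>.\<parallel>_{H^{-1}}\<close>.
  Valued in ennreal (the supremum may be infinite).\<close>
definition adaptive_var2 ::
  "'a measure \<Rightarrow> (real^'n^'n) set \<Rightarrow> nat \<Rightarrow> (nat \<Rightarrow> real^'n \<Rightarrow> 'a \<Rightarrow> real^'n) \<Rightarrow> ennreal" where
  "adaptive_var2 M Hs T g =
     (INF H \<in> {H. H \<in> Hs \<and> pd_mat H \<and> trace H \<le> 1}.
        SUP tx \<in> {..<T} \<times> UNIV.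
          \<integral>\<^sup>+ \<omega>. ennreal ((mnorm (matrix_inv H) (g (fst tx) (snd tx) \<omega> - (\<integral>\<omega>'. g (fst tx) (snd tx) \<omega>' \<partial>M)))\<^sup>2) \<partial>M)"

text \<open>Normalized steepest descent with momentum: returns \<open>(x_t, m_t)\<close>.
  \<open>g t x\<close> is the (realized) gradient \<open>\<nabla>f_t(x)\<close>, \<open>sel m\<close> a chosen element of
  \<open>argmax_{\<parallel>u\<parallel> \<le> 1} <m,u>\<close>.\<close>
primrec nsdm :: "real \<Rightarrow> real \<Rightarrow> (real^'n \<Rightarrow> real^'n) \<Rightarrow> (nat \<Rightarrow> real^'n \<Rightarrow> real^'n)
                  \<Rightarrow> real^'n \<Rightarrow> nat \<Rightarrow> (real^'n) \<times> (real^'n)" where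
  "nsdm \<alpha> \<eta> sel g x0 0 = (x0, g 0 x0)"
| "nsdm \<alpha> \<eta> sel g x0 (Suc t) =
     (let x = fst (nsdm \<alpha> \<eta> sel g x0 t); m = snd (nsdm \<alpha> \<eta> sel g x0 t);
          x' = x - \<eta> *\<^sub>R sel m
      in (x', (1 - \<alpha>) *\<^sub>R m + \<alpha> *\<^sub>R g (Suc t) x'))"

definition is_argmax_sel :: "(real^'n \<Rightarrow> real) \<Rightarrow> (real^'n \<Rightarrow> real^'n) \<Rightarrow> bool" where
  "is_argmax_sel nrm sel \<longleftrightarrow> (\<forall>m. nrm (sel m) \<le> 1 \<and> (\<forall>u. nrm u \<le> 1 \<longrightarrow> m \<bullet> u \<le> m \<bullet> sel m))"

end

theory Submission
  imports Defs
begin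

lemma psd_sym:
  assumes "psd_mat H" shows "x \<bullet> (H *v y) = y \<bullet> (H *v x)"
proof -
  have tH: "transpose H = H" using assms by (simp add: psd_mat_def)
  have "x \<bullet> (H *v y) = (x v* H) \<bullet> y" by (simp add: dot_lmul_matrix)
  also have "x v* H = transpose H *v x" by simp
  also have "\<dots> = H *v x" using tH by simp
  finally show ?thesis by (simp add: inner_commute)
qed

lemma psd_nonneg: "psd_mat H \<Longrightarrow> 0 \<le> x \<bullet> (H *v x)"
  by (simp add: psd_mat_def)

lemma quad_add: fixes H :: "real^'n::finite^'n" shows "(a+b) \<bullet> (H *v (a+b)) = a \<bullet> (H *v a) + b \<bullet> (H *v b) + a \<bullet> (H *v b) + b \<bullet> (H *v a)"
  by (simp add: matrix_vector_right_distrib inner_add_left inner_add_right)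

lemma quad_diff: fixes H :: "real^'n::finite^'n" shows "(a-b) \<bullet> (H *v (a-b)) = a \<bullet> (H *v a) + b \<bullet> (H *v b) - a \<bullet> (H *v b) - b \<bullet> (H *v a)"
proof -
  have e: "H *v (a-b) = H *v a - H *v b" by (rule vec.diff)
  show ?thesis unfolding e by (simp add: inner_diff_left inner_diff_right)
qed

lemma entry_axis: "axis i 1 \<bullet> ((H::real^'n::finite^'n) *v axis j 1) = H$i$j"
  unfolding inner_axis' by (simp add: matrix_vector_mult_def axis_def if_distrib cong: if_cong)

lemma psd_diag: "psd_mat (H::real^'n::finite^'n) \<Longrightarrow> 0 \<le> H$i$i"
  using psd_nonneg[of H "axis i 1"] by (simp add: entry_axis)

lemma psd_entry_bound:
  fixes H :: "real^'n::finite^'n"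
  assumes H: "psd_mat H" and tr: "trace H \<le> 1"
  shows "\<bar>H$i$j\<bar> \<le> 1"
proof -
  have diag: "H$k$k \<le> 1" for k
  proof -
    have "H$k$k \<le> (\<Sum>l\<in>UNIV. H$l$l)"
      by (rule member_le_sum) (auto intro: psd_diag[OF H])
    then show ?thesis using tr by (simp add: trace_def)
  qed
  have sym: "H$j$i = H$i$j"
    using psd_sym[OF H, of "axis i 1" "axis j 1"] by (simp add: entry_axis)
  have 1: "0 \<le> (axis i 1 + axis j 1) \<bullet> (H *v (axis i 1 + axis j 1))" by (rule psd_nonneg[OF H])
  have 2: "0 \<le> (axis i 1 - axis j 1) \<bullet> (H *v (axis i 1 - axis j 1))" by (rule psd_nonneg[OF H])
  from 1 2 sym diag[of i] diag[of j] show ?thesis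
    unfolding quad_add quad_diff entry_axis by linarith
qed

lemma psd_quad_bound:
  fixes H :: "real^'n::finite^'n"
  assumes H: "psd_mat H" and tr: "trace H \<le> 1"
  shows "x \<bullet> (H *v x) \<le> (\<Sum>i\<in>UNIV. \<bar>x$i\<bar>)^2"
proof -
  have "x \<bullet> (H *v x) = (\<Sum>i\<in>UNIV. x$i * (\<Sum>j\<in>UNIV. H$i$j * x$j))"
    by (simp add: inner_vec_def matrix_vector_mult_def)
  also have "\<dots> \<le> (\<Sum>i\<in>UNIV. \<bar>x$i\<bar> * (\<Sum>j\<in>UNIV. \<bar>x$j\<bar>))"
  proof (rule sum_mono)
    fix i
    have "\<bar>\<Sum>j\<in>UNIV. H$i$j * x$j\<bar> \<le> (\<Sum>j\<in>UNIV. \<bar>H$i$j * x$j\<bar>)" by (rule sum_abs)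
    also have "\<dots> \<le> (\<Sum>j\<in>UNIV. \<bar>x$j\<bar>)"
      by (rule sum_mono) (simp add: abs_mult mult_left_le_one_le psd_entry_bound[OF H tr] 
          mult_le_cancel_right1 mult_right_le_one_le)
    finally have "\<bar>\<Sum>j\<in>UNIV. H$i$j * x$j\<bar> \<le> (\<Sum>j\<in>UNIV. \<bar>x$j\<bar>)" .
    then have "\<bar>x$i * (\<Sum>j\<in>UNIV. H$i$j * x$j)\<bar> \<le> \<bar>x$i\<bar> * (\<Sum>j\<in>UNIV. \<bar>x$j\<bar>)"
      by (simp add: abs_mult mult_left_mono)
    then show "x$i * (\<Sum>j\<in>UNIV. H$i$j * x$j) \<le> \<bar>x$i\<bar> * (\<Sum>j\<in>UNIV. \<bar>x$j\<bar>)" by linarith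
  qed
  also have "\<dots> = (\<Sum>i\<in>UNIV. \<bar>x$i\<bar>)^2"
    by (simp add: sum_distrib_right[symmetric] power2_eq_square)
  finally show ?thesis .
qed

lemma mnorm_bound:
  fixes H :: "real^'n::finite^'n"
  assumes H: "psd_mat H" and tr: "trace H \<le> 1"
  shows "mnorm H x \<le> (\<Sum>i\<in>UNIV. \<bar>x$i\<bar>)"
proof -
  have "mnorm H x \<le> sqrt ((\<Sum>i\<in>UNIV. \<bar>x$i\<bar>)^2)"
    unfolding mnorm_def by (rule real_sqrt_le_mono[OF psd_quad_bound[OF H tr]])
  also have "\<dots> = (\<Sum>i\<in>UNIV. \<bar>x$i\<bar>)" by (simp add: sum_nonneg)
  finally show ?thesis .
qed

lemma scaled_id_mult: "(c *\<^sub>R (mat 1 :: real^'n::finite^'n)) *v x = c *\<^sub>R x"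
  by (simp add: matrix_scaleR_vector_ac[symmetric])

lemma scaled_id_transpose: "transpose (c *\<^sub>R (mat 1 :: real^'n::finite^'n)) = c *\<^sub>R mat 1"
  by (simp add: transpose_def mat_def vec_eq_iff)

lemma psd_scaled_id: "0 \<le> c \<Longrightarrow> psd_mat (c *\<^sub>R (mat 1 :: real^'n::finite^'n))"
  unfolding psd_mat_def scaled_id_mult scaled_id_transpose by simp

lemma pd_scaled_id: "0 < c \<Longrightarrow> pd_mat (c *\<^sub>R (mat 1 :: real^'n::finite^'n))"
  unfolding pd_mat_def scaled_id_mult scaled_id_transpose by simp

lemma trace_scaled_id: "trace (c *\<^sub>R (mat 1 :: real^'n::finite^'n)) = c * real CARD('n)"
  by (simp add: trace_def mat_def)

lemma pd_inv:
  fixes H :: "real^'n::finite^'n"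
  assumes "pd_mat H"
  shows "H ** matrix_inv H = mat 1" "matrix_inv H ** H = mat 1"
proof -
  have "\<forall>x. H *v x = 0 \<longrightarrow> x = 0"
    using assms by (auto simp: pd_mat_def)
  then have "\<exists>B. B ** H = mat 1" by (simp add: matrix_left_invertible_ker)
  then have "invertible H" by (simp add: invertible_left_inverse)
  then have "\<exists>A'. H ** A' = mat 1 \<and> A' ** H = mat 1" by (simp add: invertible_def)
  then have "H ** matrix_inv H = mat 1 \<and> matrix_inv H ** H = mat 1"
    unfolding matrix_inv_def by (rule someI_ex)
  then show "H ** matrix_inv H = mat 1" "matrix_inv H ** H = mat 1" by auto
qed


context
  fixes Hs :: "(real^'n::finite^'n) set"
  assumes ws: "well_structured Hs"
begin

lemma ws_psd: "H \<in> Hs \<Longrightarrow> psd_mat H"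
  using ws by (auto simp: well_structured_def)

lemma ws_id: "0 \<le> c \<Longrightarrow> c *\<^sub>R mat 1 \<in> Hs"
  using ws psd_scaled_id[of c] by (auto simp: well_structured_def)

definition "H1 = (1 / real CARD('n)) *\<^sub>R (mat 1 :: real^'n^'n)"

lemma H1: "H1 \<in> Hs" "pd_mat H1" "trace H1 \<le> 1"
  unfolding H1_def by (auto intro!: ws_id pd_scaled_id simp: trace_scaled_id)

lemma H0: "(0::real^'n^'n) \<in> Hs" "trace (0::real^'n^'n) \<le> 1"
  using ws_id[of 0] by (auto simp: trace_def)

lemma normH_bdd: "bdd_above {mnorm H x | H. H \<in> Hs \<and> trace H \<le> 1}"
  by (rule bdd_aboveI[where M="\<Sum>i\<in>UNIV. \<bar>x$i\<bar>"]) (auto intro: mnorm_bound ws_psd)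

lemma normH_ne: "{mnorm H x | H. H \<in> Hs \<and> trace H \<le> 1} \<noteq> {}"
  using H0 by blast

lemma mnorm_le_normH: "H \<in> Hs \<Longrightarrow> trace H \<le> 1 \<Longrightarrow> mnorm H x \<le> normH Hs x"
  unfolding normH_def by (rule cSup_upper[OF _ normH_bdd]) blast

lemma mnorm_scale: "mnorm H (c *\<^sub>R x) = \<bar>c\<bar> * mnorm H x"
proof -
  have "(c *\<^sub>R x) \<bullet> (H *v (c *\<^sub>R x)) = c^2 * (x \<bullet> (H *v x))"
    by (simp add: matrix_vector_mult_scaleR power2_eq_square)
  then show ?thesis by (simp add: mnorm_def real_sqrt_mult)
qed

lemma normH_scale: "normH Hs (c *\<^sub>R x) \<le> \<bar>c\<bar> * normH Hs x"
  unfolding normH_def[of Hs "c *\<^sub>R x"]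
proof (rule cSup_least[OF normH_ne])
  fix v assume "v \<in> {mnorm H (c *\<^sub>R x) | H. H \<in> Hs \<and> trace H \<le> 1}"
  then obtain H where H: "H \<in> Hs" "trace H \<le> 1" "v = mnorm H (c *\<^sub>R x)" by blast
  then show "v \<le> \<bar>c\<bar> * normH Hs x"
    using mnorm_le_normH[OF H(1,2), of x] by (simp add: mnorm_scale mult_left_mono)
qed

lemma normH_neg: "normH Hs (- x) = normH Hs x"
proof -
  have "mnorm H (-x) = mnorm H x" for H by (simp add: mnorm_def vec.neg)
  then show ?thesis by (simp add: normH_def)
qed

lemma normH_nonneg: "0 \<le> normH Hs x"
  using mnorm_le_normH[OF H0, of x] by (simp add: mnorm_def)

lemma normH_zero: "normH Hs 0 = 0"
  using normH_scale[of 0 0] normH_nonneg[of 0] by simp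

lemma normH_pos: "x \<noteq> 0 \<Longrightarrow> 0 < normH Hs x"
proof -
  assume "x \<noteq> 0"
  have "0 < mnorm H1 x"
    unfolding mnorm_def H1_def scaled_id_mult using \<open>x \<noteq> 0\<close> by simp
  also have "\<dots> \<le> normH Hs x" using H1 by (intro mnorm_le_normH) auto
  finally show ?thesis .
qed

lemma key_inv:
  assumes H: "H \<in> Hs" "pd_mat H" "trace H \<le> 1" and x: "normH Hs x \<le> 1"
  shows "x \<bullet> y \<le> mnorm (matrix_inv H) y" "0 \<le> y \<bullet> (matrix_inv H *v y)"
proof -
  have psd: "psd_mat H" using ws_psd H by blast
  define z where "z = matrix_inv H *v y"
  have Hz: "H *v z = y" unfolding z_def matrix_vector_mul_assoc pd_inv[OF H(2)] by simp
  define q where "q = y \<bullet> (matrix_inv H *v y)"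
  have q: "q = z \<bullet> (H *v z)" unfolding q_def z_def[symmetric] Hz by (simp add: inner_commute)
  show q0: "0 \<le> y \<bullet> (matrix_inv H *v y)" using psd_nonneg[OF psd, of z] q q_def by simp
  have xHx0: "0 \<le> x \<bullet> (H *v x)" by (rule psd_nonneg[OF psd])
  have "mnorm H x \<le> 1" using mnorm_le_normH[OF H(1,3), of x] x by simp
  then have xHx: "x \<bullet> (H *v x) \<le> 1" unfolding mnorm_def using xHx0 by simp
  have s: "z \<bullet> (H *v x) = x \<bullet> y" using psd_sym[OF psd, of x z] Hz by simp
  have main: "2 * k * (x \<bullet> y) \<le> k^2 + q" if "0 < k" for k
  proof -
    have "0 \<le> (k *\<^sub>R x - z) \<bullet> (H *v (k *\<^sub>R x - z))" by (rule psd_nonneg[OF psd])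
    also have "\<dots> = k^2 * (x \<bullet> (H *v x)) + q - 2 * k * (x \<bullet> y)"
      unfolding quad_diff q using psd_sym[OF psd, of z "k *\<^sub>R x"] Hz s
      by (simp add: matrix_vector_mult_scaleR power2_eq_square algebra_simps)
    finally have "2 * k * (x \<bullet> y) \<le> k^2 * (x \<bullet> (H *v x)) + q" by simp
    also have "\<dots> \<le> k^2 + q" using xHx by (simp add: mult_left_le)
    finally show ?thesis .
  qed
  show "x \<bullet> y \<le> mnorm (matrix_inv H) y"
  proof (cases "q = 0")
    case True
    show ?thesis
    proof (rule ccontr)
      assume "\<not> ?thesis"
      then have p: "0 < x \<bullet> y" using True by (simp add: mnorm_def q_def)
      from main[OF p] True have "2 * (x \<bullet> y)^2 \<le> (x \<bullet> y)^2" by (simp add: power2_eq_square)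
      with p show False by (simp add: power2_eq_square)
    qed
  next
    case False
    then have qp: "0 < q" using q0 q_def by simp
    from main[of "sqrt q"] qp have "2 * sqrt q * (x \<bullet> y) \<le> 2 * q" by simp
    also have "2 * q = 2 * sqrt q * sqrt q" using qp by simp
    finally have "sqrt q * (x \<bullet> y) \<le> sqrt q * sqrt q" by simp
    moreover have "0 < sqrt q" using qp by simp
    ultimately have "x \<bullet> y \<le> sqrt q" by (meson mult_le_cancel_left_pos)
    then show ?thesis by (simp add: mnorm_def q_def)
  qed
qed

lemma dualH_bdd: "bdd_above {x \<bullet> y | x. normH Hs x \<le> 1}"
  by (rule bdd_aboveI[where M="mnorm (matrix_inv H1) y"]) (auto intro: key_inv(1)[OF H1])

lemma dualH_ne: "{x \<bullet> y | x. normH Hs x \<le> 1} \<noteq> {}"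
proof -
  have "\<exists>x. 0 = x \<bullet> y \<and> normH Hs x \<le> 1" using normH_zero by (intro exI[of _ 0]) simp
  then show ?thesis by blast
qed

lemma dualH_ge: "normH Hs x \<le> 1 \<Longrightarrow> x \<bullet> y \<le> dualH Hs y"
  unfolding dualH_def by (rule cSup_upper[OF _ dualH_bdd]) blast

lemma dualH_le_inv: "H \<in> Hs \<Longrightarrow> pd_mat H \<Longrightarrow> trace H \<le> 1 \<Longrightarrow> dualH Hs y \<le> mnorm (matrix_inv H) y"
  unfolding dualH_def by (rule cSup_least[OF dualH_ne]) (auto intro: key_inv)

lemma dualH_add: "dualH Hs (a + b) \<le> dualH Hs a + dualH Hs b"
  unfolding dualH_def[of Hs "a+b"]
proof (rule cSup_least[OF dualH_ne])
  fix v assume "v \<in> {x \<bullet> (a + b) | x. normH Hs x \<le> 1}"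
  then obtain x where "normH Hs x \<le> 1" "v = x \<bullet> (a+b)" by blast
  then show "v \<le> dualH Hs a + dualH Hs b"
    using dualH_ge[of x a] dualH_ge[of x b] by (simp add: inner_add_right)
qed

lemma dualH_scale: "0 \<le> c \<Longrightarrow> dualH Hs (c *\<^sub>R a) \<le> c * dualH Hs a"
  unfolding dualH_def[of Hs "c *\<^sub>R a"]
proof (rule cSup_least[OF dualH_ne])
  fix v assume c: "0 \<le> c" and "v \<in> {x \<bullet> (c *\<^sub>R a) | x. normH Hs x \<le> 1}"
  then obtain x where "normH Hs x \<le> 1" "v = x \<bullet> (c *\<^sub>R a)" by blast
  then show "v \<le> c * dualH Hs a"
    using dualH_ge[of x a] c by (simp add: mult_left_mono)
qed

lemma dualH_neg: "dualH Hs (- a) \<le> dualH Hs a"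
  unfolding dualH_def[of Hs "- a"]
proof (rule cSup_least[OF dualH_ne])
  fix v assume "v \<in> {x \<bullet> (- a) | x. normH Hs x \<le> 1}"
  then obtain x where "normH Hs x \<le> 1" "v = x \<bullet> (- a)" by blast
  then show "v \<le> dualH Hs a"
    using dualH_ge[of "-x" a] by (simp add: normH_neg)
qed

lemma dualH_nonneg: "0 \<le> dualH Hs a"
  using dualH_ge[of 0 a] normH_zero by simp

end

primrec noise :: "real \<Rightarrow> real \<Rightarrow> (real^'n \<Rightarrow> real^'n) \<Rightarrow> (real^'n \<Rightarrow> real^'n)
   \<Rightarrow> (nat \<Rightarrow> real^'n \<Rightarrow> real^'n) \<Rightarrow> real^'n \<Rightarrow> nat \<Rightarrow> real^'n" where
  "noise \<alpha> \<eta> sel Df g x0 0 = g 0 x0 - Df x0"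
| "noise \<alpha> \<eta> sel Df g x0 (Suc t) = (1 - \<alpha>) *\<^sub>R noise \<alpha> \<eta> sel Df g x0 t
     + \<alpha> *\<^sub>R (g (Suc t) (fst (nsdm \<alpha> \<eta> sel g x0 (Suc t))) - Df (fst (nsdm \<alpha> \<eta> sel g x0 (Suc t))))"

lemma nsdm_Suc_fst: "fst (nsdm \<alpha> \<eta> sel g x0 (Suc t)) = fst (nsdm \<alpha> \<eta> sel g x0 t) - \<eta> *\<^sub>R sel (snd (nsdm \<alpha> \<eta> sel g x0 t))"
  by (simp add: Let_def)

lemma nsdm_Suc_snd: "snd (nsdm \<alpha> \<eta> sel g x0 (Suc t)) = (1 - \<alpha>) *\<^sub>R snd (nsdm \<alpha> \<eta> sel g x0 t) + \<alpha> *\<^sub>R g (Suc t) (fst (nsdm \<alpha> \<eta> sel g x0 (Suc t)))"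
  by (simp add: Let_def)

lemma descent_mvt:
  fixes f :: "real^'n::finite \<Rightarrow> real"
  assumes f_grad: "\<And>x. (f has_derivative (\<lambda>h. Df x \<bullet> h)) (at x)"
  shows "\<exists>\<theta>\<in>{0..1}. f (x + d) - f x = Df (x + \<theta> *\<^sub>R d) \<bullet> d"
proof -
  have "\<exists>s\<in>{0..1::real}. (\<lambda>s. f (x + s *\<^sub>R d)) 1 - (\<lambda>s. f (x + s *\<^sub>R d)) 0 = (\<lambda>h. h * (Df (x + s *\<^sub>R d) \<bullet> d)) (1 - 0)"
  proof (rule mvt_very_simple)
    fix s :: real
    have 1: "((\<lambda>s. x + s *\<^sub>R d) has_derivative (\<lambda>h. h *\<^sub>R d)) (at s)"
      by (auto intro!: derivative_eq_intros)
    have "((f \<circ> (\<lambda>s. x + s *\<^sub>R d)) has_derivative ((\<lambda>h. Df (x + s *\<^sub>R d) \<bullet> h) \<circ> (\<lambda>h. h *\<^sub>R d))) (at s)"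
      by (rule diff_chain_at[OF 1 f_grad])
    then have "((\<lambda>s. f (x + s *\<^sub>R d)) has_derivative (\<lambda>h. h * (Df (x + s *\<^sub>R d) \<bullet> d))) (at s)"
      by (simp add: o_def)
    then show "((\<lambda>s. f (x + s *\<^sub>R d)) has_derivative (\<lambda>h. h * (Df (x + s *\<^sub>R d) \<bullet> d))) (at s within {0..1})"
      by (rule has_derivative_at_withinI)
  qed simp
  then show ?thesis by simp
qed

context
  fixes Hs :: "(real^'n::finite^'n) set"
  assumes ws: "well_structured Hs"
begin

lemma descent:
  fixes f :: "real^'n \<Rightarrow> real"
  assumes f_grad: "\<And>x. (f has_derivative (\<lambda>h. Df x \<bullet> h)) (at x)"
    and L: "L \<in> lip_set Hs Df" "0 \<le> L" and u: "normH Hs u \<le> 1" and eta: "0 < \<eta>"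
  shows "f (x - \<eta> *\<^sub>R u) \<le> f x - \<eta> * (Df x \<bullet> u) + L * \<eta>^2"
proof -
  obtain \<theta> where th: "\<theta> \<in> {0..1}" and eq: "f (x + (- \<eta> *\<^sub>R u)) - f x = Df (x + \<theta> *\<^sub>R (- \<eta> *\<^sub>R u)) \<bullet> (- \<eta> *\<^sub>R u)"
    using descent_mvt[OF f_grad] by blast
  define z where "z = x + \<theta> *\<^sub>R (- \<eta> *\<^sub>R u)"
  have "f (x - \<eta> *\<^sub>R u) - f x = - \<eta> * (Df z \<bullet> u)" using eq by (simp add: z_def)
  also have "\<dots> = - \<eta> * (Df x \<bullet> u) + \<eta> * ((Df x - Df z) \<bullet> u)" by (simp add: algebra_simps inner_diff_left)
  also have "(Df x - Df z) \<bullet> u \<le> dualH Hs (Df x - Df z)"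
    using dualH_ge[OF ws u, of "Df x - Df z"] by (metis inner_commute)
  also have "dualH Hs (Df x - Df z) \<le> L * normH Hs (x - z)" using L(1) by (simp add: lip_set_def)
  also have "x - z = (\<theta> * \<eta>) *\<^sub>R u" by (simp add: z_def)
  also have "normH Hs ((\<theta> * \<eta>) *\<^sub>R u) \<le> \<bar>\<theta> * \<eta>\<bar> * normH Hs u" by (rule normH_scale[OF ws])
  also have "\<bar>\<theta> * \<eta>\<bar> * normH Hs u \<le> \<eta>"
  proof -
    have "\<bar>\<theta> * \<eta>\<bar> = \<theta> * \<eta>" using th eta by simp
    moreover have "\<theta> * \<eta> * normH Hs u \<le> \<theta> * \<eta> * 1" using th eta u by (intro mult_left_mono) auto
    moreover have "\<theta> * \<eta> \<le> \<eta>" using th eta by (simp add: mult_left_le_one_le)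
    ultimately show ?thesis by linarith
  qed
  finally have "f (x - \<eta> *\<^sub>R u) - f x \<le> \<eta> * (L * \<eta>) - \<eta> * (Df x \<bullet> u)"
    using eta L(2) by (simp add: mult_left_mono)
  then show ?thesis by (simp add: power2_eq_square algebra_simps)
qed


lemma lin6: "(a::real) = b - c \<Longrightarrow> d \<le> b \<Longrightarrow> c \<le> e \<Longrightarrow> f \<le> d + h \<Longrightarrow> e \<le> k \<Longrightarrow> h \<le> k \<Longrightarrow> f - 2*k \<le> a"
  by linarith

lemma sel_props:
  assumes sel: "is_argmax_sel (normH Hs) sel"
  shows "normH Hs (sel m) \<le> 1" "dualH Hs m \<le> m \<bullet> sel m"
proof -
  show "normH Hs (sel m) \<le> 1" using sel by (simp add: is_argmax_sel_def)
  show "dualH Hs m \<le> m \<bullet> sel m"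
    unfolding dualH_def
  proof (rule cSup_least[OF dualH_ne[OF ws]])
    fix v assume "v \<in> {x \<bullet> m | x. normH Hs x \<le> 1}"
    then obtain x where "normH Hs x \<le> 1" "v = x \<bullet> m" by blast
    then show "v \<le> m \<bullet> sel m" using sel by (auto simp: is_argmax_sel_def inner_commute)
  qed
qed

lemma pathwise:
  fixes f :: "real^'n \<Rightarrow> real" and g :: "nat \<Rightarrow> real^'n \<Rightarrow> real^'n"
  assumes alpha: "0 < \<alpha>" "\<alpha> < 1" and eta: "0 < \<eta>"
    and f_grad: "\<And>x. (f has_derivative (\<lambda>h. Df x \<bullet> h)) (at x)"
    and f_bdd: "bdd_below (range f)"
    and L: "L \<in> lip_set Hs Df" "0 \<le> L"
    and sel: "is_argmax_sel (normH Hs) sel"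
    and H: "H \<in> Hs" "pd_mat H" "trace H \<le> 1" and T: "1 \<le> T"
  shows "(1 / real T) * (\<Sum>t<T. dualH Hs (Df (fst (nsdm \<alpha> \<eta> sel g x0 t))))
     \<le> (f x0 - Inf (range f)) / (\<eta> * real T) + 2 * \<eta> / \<alpha> * L
        + (2 / real T) * (\<Sum>t<T. mnorm (matrix_inv H) (noise \<alpha> \<eta> sel Df g x0 t))"
proof -
  define xs where "xs = (\<lambda>t. fst (nsdm \<alpha> \<eta> sel g x0 t))"
  define ms where "ms = (\<lambda>t. snd (nsdm \<alpha> \<eta> sel g x0 t))"
  define N where "N = noise \<alpha> \<eta> sel Df g x0"
  define W where "W = (\<lambda>t. mnorm (matrix_inv H) (N t))"
  define D where "D = L * \<eta> * (1 - \<alpha>) / \<alpha>"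
  have xs0: "xs 0 = x0" and ms0: "ms 0 = g 0 x0" and N0: "N 0 = g 0 x0 - Df x0"
    by (simp_all add: xs_def ms_def N_def)
  have xsS: "xs (Suc t) = xs t - \<eta> *\<^sub>R sel (ms t)" for t
    unfolding xs_def ms_def by (rule nsdm_Suc_fst)
  have msS: "ms (Suc t) = (1 - \<alpha>) *\<^sub>R ms t + \<alpha> *\<^sub>R g (Suc t) (xs (Suc t))" for t
    unfolding xs_def ms_def by (rule nsdm_Suc_snd)
  have NS: "N (Suc t) = (1 - \<alpha>) *\<^sub>R N t + \<alpha> *\<^sub>R (g (Suc t) (xs (Suc t)) - Df (xs (Suc t)))" for t
    unfolding xs_def N_def by simp
  have D0: "0 \<le> D" using L(2) alpha eta by (simp add: D_def)
  have lipstep: "dualH Hs (Df (xs t) - Df (xs (Suc t))) \<le> L * \<eta>" for t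
  proof -
    have "dualH Hs (Df (xs t) - Df (xs (Suc t))) \<le> L * normH Hs (xs t - xs (Suc t))"
      using L(1) by (simp add: lip_set_def)
    also have "xs t - xs (Suc t) = \<eta> *\<^sub>R sel (ms t)" by (simp add: xsS)
    also have "normH Hs (\<eta> *\<^sub>R sel (ms t)) \<le> \<eta>"
      using normH_scale[OF ws, of \<eta> "sel (ms t)"] sel_props(1)[OF sel, of "ms t"] eta
      by (smt (verit) mult_left_le)
    finally show ?thesis using L(2) by (simp add: mult_left_mono)
  qed
  have drift: "dualH Hs (ms t - Df (xs t) - N t) \<le> D" for t
  proof (induction t)
    case 0
    have "dualH Hs (0 *\<^sub>R (0::real^'n)) \<le> 0 * dualH Hs 0" by (rule dualH_scale[OF ws]) simp
    then show ?case using D0 by (simp add: xs0 ms0 N0)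
  next
    case (Suc t)
    have e: "ms (Suc t) - Df (xs (Suc t)) - N (Suc t) = (1 - \<alpha>) *\<^sub>R (ms t - Df (xs t) - N t)
        + (1 - \<alpha>) *\<^sub>R (Df (xs t) - Df (xs (Suc t)))"
      unfolding msS NS by (simp add: algebra_simps)
    have "dualH Hs (ms (Suc t) - Df (xs (Suc t)) - N (Suc t)) \<le>
        dualH Hs ((1 - \<alpha>) *\<^sub>R (ms t - Df (xs t) - N t)) + dualH Hs ((1 - \<alpha>) *\<^sub>R (Df (xs t) - Df (xs (Suc t))))"
      unfolding e by (rule dualH_add[OF ws])
    also have "\<dots> \<le> (1 - \<alpha>) * dualH Hs (ms t - Df (xs t) - N t) + (1 - \<alpha>) * dualH Hs (Df (xs t) - Df (xs (Suc t)))"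
      using alpha by (intro add_mono dualH_scale[OF ws]) auto
    also have "\<dots> \<le> (1 - \<alpha>) * D + (1 - \<alpha>) * (L * \<eta>)"
      using alpha Suc.IH lipstep[of t] by (intro add_mono mult_left_mono) auto
    also have "\<dots> = D" using alpha by (simp add: D_def field_simps)
    finally show ?case .
  qed
  have Wneg: "mnorm (matrix_inv H) (- v) = mnorm (matrix_inv H) v" for v
    by (simp add: mnorm_def vec.neg)
  have step: "\<eta> * dualH Hs (Df (xs t)) \<le> f (xs t) - f (xs (Suc t)) + 2 * \<eta> * (D + W t) + L * \<eta>^2" for t
  proof -
    let ?u = "sel (ms t)" and ?e = "ms t - Df (xs t)"
    have u: "normH Hs ?u \<le> 1" by (rule sel_props(1)[OF sel])
    have f1: "f (xs (Suc t)) \<le> f (xs t) - \<eta> * (Df (xs t) \<bullet> ?u) + L * \<eta>^2"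
      unfolding xsS by (rule descent[OF f_grad L u eta])
    have a: "Df (xs t) \<bullet> ?u = ms t \<bullet> ?u - ?e \<bullet> ?u" by (simp add: inner_diff_left)
    have b: "dualH Hs (ms t) \<le> ms t \<bullet> ?u" by (rule sel_props(2)[OF sel])
    have c: "?e \<bullet> ?u \<le> dualH Hs ?e" using dualH_ge[OF ws u, of ?e] by (simp add: inner_commute)
    have d: "dualH Hs (Df (xs t)) \<le> dualH Hs (ms t) + dualH Hs (- ?e)"
      using dualH_add[OF ws, of "ms t" "- ?e"] by simp
    have e1: "dualH Hs ?e \<le> D + W t"
    proof -
      have "dualH Hs ?e \<le> dualH Hs (?e - N t) + dualH Hs (N t)"
        using dualH_add[OF ws, of "?e - N t" "N t"] by simp
      also have "\<dots> \<le> D + W t"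
        using drift[of t] dualH_le_inv[OF ws H, of "N t"] by (simp add: W_def)
      finally show ?thesis .
    qed
    have e2: "dualH Hs (- ?e) \<le> D + W t"
    proof -
      have "dualH Hs (- ?e) \<le> dualH Hs (- (?e - N t)) + dualH Hs (- N t)"
        using dualH_add[OF ws, of "- (?e - N t)" "- N t"] by simp
      also have "\<dots> \<le> dualH Hs (?e - N t) + dualH Hs (- N t)"
        using dualH_neg[OF ws, of "?e - N t"] by simp
      also have "\<dots> \<le> D + W t"
        using drift[of t] dualH_le_inv[OF ws H, of "- N t"] by (simp add: W_def Wneg)
      finally show ?thesis .
    qed
    have "dualH Hs (Df (xs t)) - 2 * (D + W t) \<le> Df (xs t) \<bullet> ?u"
      using lin6[OF a b c d e1 e2] .
    then have "\<eta> * (dualH Hs (Df (xs t)) - 2 * (D + W t)) \<le> \<eta> * (Df (xs t) \<bullet> ?u)"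
      using eta by (intro mult_left_mono) auto
    then show ?thesis using f1 by (simp add: algebra_simps)
  qed
  have sum1: "\<eta> * (\<Sum>t<T. dualH Hs (Df (xs t))) \<le> (\<Sum>t<T. f (xs t) - f (xs (Suc t)) + 2 * \<eta> * (D + W t) + L * \<eta>^2)"
    unfolding sum_distrib_left by (rule sum_mono) (rule step)
  also have "\<dots> = (f (xs 0) - f (xs T)) + real T * (2 * \<eta> * D + L * \<eta>^2) + 2 * \<eta> * (\<Sum>t<T. W t)"
  proof -
    have "(\<Sum>t<T. f (xs t) - f (xs (Suc t))) = f (xs 0) - f (xs T)"
      using sum_lessThan_telescope'[of "\<lambda>t. f (xs t)" T] by simp
    moreover have "(\<Sum>t<T. f (xs t) - f (xs (Suc t)) + 2 * \<eta> * (D + W t) + L * \<eta>^2)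
       = (\<Sum>t<T. f (xs t) - f (xs (Suc t))) + (\<Sum>t<T. 2 * \<eta> * (D + W t)) + (\<Sum>t<T. L * \<eta>^2)"
      by (simp add: sum.distrib)
    moreover have "(\<Sum>t<T. 2 * \<eta> * (D + W t)) = real T * (2 * \<eta> * D) + 2 * \<eta> * (\<Sum>t<T. W t)"
      by (simp add: sum.distrib sum_distrib_left algebra_simps)
    ultimately show ?thesis by (simp add: algebra_simps)
  qed
  finally have sum1': "\<eta> * (\<Sum>t<T. dualH Hs (Df (xs t))) \<le> (f (xs 0) - f (xs T)) + real T * (2 * \<eta> * D + L * \<eta>^2) + 2 * \<eta> * (\<Sum>t<T. W t)" .
  have "f (xs T) \<ge> Inf (range f)" using f_bdd by (simp add: cInf_lower)
  with sum1' have sum2: "\<eta> * (\<Sum>t<T. dualH Hs (Df (xs t))) \<le> (f x0 - Inf (range f)) + real T * (2 * \<eta> * D + L * \<eta>^2) + 2 * \<eta> * (\<Sum>t<T. W t)"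
    by (simp add: xs0)
  have Tp: "0 < real T" using T by simp
  have "(1 / real T) * (\<Sum>t<T. dualH Hs (Df (xs t))) = (\<eta> * (\<Sum>t<T. dualH Hs (Df (xs t)))) / (\<eta> * real T)"
    using eta by simp
  also have "\<dots> \<le> ((f x0 - Inf (range f)) + real T * (2 * \<eta> * D + L * \<eta>^2) + 2 * \<eta> * (\<Sum>t<T. W t)) / (\<eta> * real T)"
    using sum2 eta Tp by (intro divide_right_mono) auto
  also have "\<dots> = (f x0 - Inf (range f)) / (\<eta> * real T) + (2 * D + L * \<eta>) + (2 / real T) * (\<Sum>t<T. W t)"
    using eta Tp by (simp add: field_simps power2_eq_square)
  also have "2 * D + L * \<eta> \<le> 2 * \<eta> / \<alpha> * L"
  proof -
    have "2 * D + L * \<eta> = 2 * \<eta> / \<alpha> * L - L * \<eta>" using alpha by (simp add: D_def field_simps)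
    moreover have "0 \<le> L * \<eta>" using L(2) eta by simp
    ultimately show ?thesis by linarith
  qed
  finally show ?thesis by (simp add: xs_def W_def N_def)
qed

end

context
  fixes Hs :: "(real^'n::finite^'n) set"
  assumes ws: "well_structured Hs"
begin

lemma lip_set_nonneg: "L \<in> lip_set Hs Df \<Longrightarrow> 0 \<le> L"
proof (rule ccontr)
  fix i :: 'n
  assume L: "L \<in> lip_set Hs Df" and "\<not> 0 \<le> L"
  define e :: "real^'n" where "e = axis i 1"
  have "e \<noteq> 0" by (simp add: e_def axis_eq_0_iff)
  then have "0 < normH Hs (e - 0)" using normH_pos[OF ws] by simp
  with \<open>\<not> 0 \<le> L\<close> have "L * normH Hs (e - 0) < 0" by (simp add: mult_neg_pos)
  moreover have "dualH Hs (Df e - Df 0) \<le> L * normH Hs (e - 0)" using L unfolding lip_set_def by blast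
  moreover have "0 \<le> dualH Hs (Df e - Df 0)" by (rule dualH_nonneg[OF ws])
  ultimately show False by linarith
qed

lemma lip_const_nonneg: "lip_set Hs Df \<noteq> {} \<Longrightarrow> 0 \<le> lip_const Hs Df"
  unfolding lip_const_def by (rule cInf_greatest) (auto intro: lip_set_nonneg)

lemma lip_const_in: assumes ne: "lip_set Hs Df \<noteq> {}" shows "lip_const Hs Df \<in> lip_set Hs Df"
proof -
  obtain L0 where L0: "L0 \<in> lip_set Hs Df" using ne by blast
  have "dualH Hs (Df x - Df y) \<le> lip_const Hs Df * normH Hs (x - y)" for x y
  proof (cases "x = y")
    case True
    have "dualH Hs (Df x - Df x) \<le> L0 * normH Hs (x - x)" using L0 unfolding lip_set_def by blast
    then show ?thesis using True normH_zero[OF ws] by simp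
  next
    case False
    then have n: "0 < normH Hs (x - y)" using normH_pos[OF ws] by simp
    have "dualH Hs (Df x - Df y) / normH Hs (x - y) \<le> lip_const Hs Df"
      unfolding lip_const_def
    proof (rule cInf_greatest[OF ne])
      fix L assume "L \<in> lip_set Hs Df"
      then have "dualH Hs (Df x - Df y) \<le> L * normH Hs (x - y)" by (simp add: lip_set_def)
      then show "dualH Hs (Df x - Df y) / normH Hs (x - y) \<le> L" using n by (simp add: divide_le_eq)
    qed
    then show ?thesis using n by (simp add: divide_le_eq)
  qed
  then show ?thesis by (simp add: lip_set_def)
qed

end

lemma cont_quad: "continuous_on UNIV (\<lambda>v::real^'n::finite. v \<bullet> (A *v v))"
proof -
  have "continuous_on UNIV (\<lambda>v::real^'n. A *v v)" by (rule matrix_vector_mult_linear_continuous_on)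
  then show ?thesis by (intro continuous_intros)
qed

lemma meas_quad: "f \<in> borel_measurable M \<Longrightarrow> (\<lambda>w. f w \<bullet> (A *v f w)) \<in> borel_measurable M"
  for f :: "_ \<Rightarrow> real^'n::finite"
  using borel_measurable_continuous_on[OF cont_quad] by blast

lemma meas_mnorm: "f \<in> borel_measurable M \<Longrightarrow> (\<lambda>w. mnorm A (f w)) \<in> borel_measurable M"
  for f :: "_ \<Rightarrow> real^'n::finite"
  unfolding mnorm_def using measurable_compose[OF meas_quad borel_measurable_sqrt] by blast

lemma nn_sqrt_bound:
  fixes Y :: "'a \<Rightarrow> real"
  assumes M: "prob_space M" and Ym: "Y \<in> borel_measurable M" and Y0: "\<And>w. 0 \<le> Y w"
    and c: "0 < c" and V: "(\<integral>\<^sup>+ w. ennreal ((Y w)^2) \<partial>M) \<le> ennreal (c^2)"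
  shows "(\<integral>\<^sup>+ w. ennreal (Y w) \<partial>M) \<le> ennreal c"
proof -
  interpret prob_space M by fact
  have pt: "Y w \<le> (1 / (2*c)) * (Y w)^2 + c / 2" for w
  proof -
    have "0 \<le> (Y w - c)^2" by simp
    then have "2 * c * Y w \<le> (Y w)^2 + c^2" by (simp add: power2_eq_square algebra_simps)
    then show ?thesis using c by (simp add: field_simps power2_eq_square)
  qed
  have "(\<integral>\<^sup>+ w. ennreal (Y w) \<partial>M) \<le> (\<integral>\<^sup>+ w. ennreal (1 / (2*c)) * ennreal ((Y w)^2) + ennreal (c / 2) \<partial>M)"
    using pt c by (intro nn_integral_mono) (simp add: ennreal_mult[symmetric] ennreal_plus[symmetric] del: ennreal_plus)
  also have "\<dots> = ennreal (1 / (2*c)) * (\<integral>\<^sup>+ w. ennreal ((Y w)^2) \<partial>M) + ennreal (c / 2)"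
    using Ym by (subst nn_integral_add) (auto simp: nn_integral_cmult emeasure_space_1)
  also have "\<dots> \<le> ennreal (1 / (2*c)) * ennreal (c^2) + ennreal (c / 2)"
    using V by (intro add_mono mult_left_mono) auto
  also have "\<dots> = ennreal c"
    using c by (simp add: ennreal_mult[symmetric] ennreal_plus[symmetric] power2_eq_square field_simps del: ennreal_plus)
  finally show ?thesis .
qed

lemma inner_step:
  fixes \<delta> :: "'a \<Rightarrow> real^'n::finite" and A :: "real^'n^'n"
  assumes M: "prob_space M" and int: "integrable M \<delta>" and mean: "integral\<^sup>L M \<delta> = 0"
    and Qnn: "\<And>v. 0 \<le> v \<bullet> (A *v v)"
    and V: "(\<integral>\<^sup>+ w. ennreal (\<delta> w \<bullet> (A *v \<delta> w)) \<partial>M) \<le> ennreal V" and V0: "0 \<le> V"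
  shows "(\<integral>\<^sup>+ w. ennreal ((c + \<alpha> *\<^sub>R \<delta> w) \<bullet> (A *v (c + \<alpha> *\<^sub>R \<delta> w))) \<partial>M) \<le> ennreal (c \<bullet> (A *v c) + \<alpha>^2 * V)"
proof -
  interpret prob_space M by fact
  define q where "q w = \<delta> w \<bullet> (A *v \<delta> w)" for w
  have dm: "\<delta> \<in> borel_measurable M" using int by (rule borel_measurable_integrable)
  have qm: "q \<in> borel_measurable M" unfolding q_def by (rule meas_quad[OF dm])
  have qint: "integrable M q"
  proof (rule integrableI_bounded[OF qm])
    have "(\<integral>\<^sup>+ w. ennreal (norm (q w)) \<partial>M) = (\<integral>\<^sup>+ w. ennreal (q w) \<partial>M)"
      using Qnn by (intro nn_integral_cong) (simp add: q_def)
    also have "\<dots> \<le> ennreal V" using V by (simp add: q_def)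
    also have "\<dots> < \<infinity>" by simp
    finally show "(\<integral>\<^sup>+ w. ennreal (norm (q w)) \<partial>M) < \<infinity>" .
  qed
  define F where "F w = (c + \<alpha> *\<^sub>R \<delta> w) \<bullet> (A *v (c + \<alpha> *\<^sub>R \<delta> w))" for w
  have Feq: "F w = c \<bullet> (A *v c) + \<alpha> * ((c v* A) \<bullet> \<delta> w + \<delta> w \<bullet> (A *v c)) + \<alpha>^2 * q w" for w
    unfolding F_def q_def quad_add
    by (simp add: matrix_vector_mult_scaleR dot_lmul_matrix power2_eq_square algebra_simps)
  have i1: "integrable M (\<lambda>w. (c v* A) \<bullet> \<delta> w)" by (intro integrable_inner_right int)
  have i2: "integrable M (\<lambda>w. \<delta> w \<bullet> (A *v c))" by (intro integrable_inner_left int)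
  have Fint: "integrable M F"
    unfolding Feq[abs_def] using i1 i2 qint by (intro Bochner_Integration.integrable_add integrable_mult_right integrable_const) auto
  have "integral\<^sup>L M F = c \<bullet> (A *v c) + \<alpha>^2 * integral\<^sup>L M q"
    unfolding Feq[abs_def] using i1 i2 qint int mean
    by (simp add: Bochner_Integration.integral_add integrable_mult_right Bochner_Integration.integrable_add prob_space)
  moreover have "integral\<^sup>L M q \<le> V"
  proof -
    have "ennreal (integral\<^sup>L M q) = (\<integral>\<^sup>+ w. ennreal (q w) \<partial>M)"
      using qint Qnn by (subst nn_integral_eq_integral) (auto simp: q_def)
    also have "\<dots> \<le> ennreal V" using V by (simp add: q_def)
    finally show ?thesis using V0 by simp
  qed
  ultimately have "integral\<^sup>L M F \<le> c \<bullet> (A *v c) + \<alpha>^2 * V" by (simp add: mult_left_mono)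
  moreover have "(\<integral>\<^sup>+ w. ennreal (F w) \<partial>M) = ennreal (integral\<^sup>L M F)"
    using Fint Qnn by (subst nn_integral_eq_integral) (auto simp: F_def)
  ultimately show ?thesis by (simp add: F_def ennreal_leI)
qed

definition gh :: "(nat \<Rightarrow> 'b \<Rightarrow> real^'n \<Rightarrow> real^'n) \<Rightarrow> (nat \<Rightarrow> 'b) \<Rightarrow> nat \<Rightarrow> real^'n \<Rightarrow> real^'n" where
  "gh G z = (\<lambda>s x. G s (z s) x)"

lemma nsdm_local: "(\<And>s. s \<le> t \<Longrightarrow> g s = g' s) \<Longrightarrow> nsdm \<alpha> \<eta> sel g x0 t = nsdm \<alpha> \<eta> sel g' x0 t"
proof (induction t)
  case 0 then show ?case by simp
next
  case (Suc t)
  then have "nsdm \<alpha> \<eta> sel g x0 t = nsdm \<alpha> \<eta> sel g' x0 t" by simp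
  with Suc.prems[of "Suc t"] show ?case by (simp add: Let_def)
qed

lemma nsdm_local_fst: "(\<And>s. s \<le> t \<Longrightarrow> g s = g' s) \<Longrightarrow> fst (nsdm \<alpha> \<eta> sel g x0 (Suc t)) = fst (nsdm \<alpha> \<eta> sel g' x0 (Suc t))"
proof -
  assume "\<And>s. s \<le> t \<Longrightarrow> g s = g' s"
  then have "nsdm \<alpha> \<eta> sel g x0 t = nsdm \<alpha> \<eta> sel g' x0 t" by (rule nsdm_local)
  then show ?thesis by (simp only: nsdm_Suc_fst)
qed

lemma noise_local: "(\<And>s. s \<le> t \<Longrightarrow> g s = g' s) \<Longrightarrow> noise \<alpha> \<eta> sel Df g x0 t = noise \<alpha> \<eta> sel Df g' x0 t"
proof (induction t)
  case 0 then show ?case by simp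
next
  case (Suc t)
  then have "noise \<alpha> \<eta> sel Df g x0 t = noise \<alpha> \<eta> sel Df g' x0 t" by simp
  moreover have "nsdm \<alpha> \<eta> sel g x0 (Suc t) = nsdm \<alpha> \<eta> sel g' x0 (Suc t)" using Suc.prems by (rule nsdm_local)
  ultimately show ?case using Suc.prems[of "Suc t"] by simp
qed

context
  fixes M :: "'a measure" and S :: "nat \<Rightarrow> 'b measure" and \<xi> :: "nat \<Rightarrow> 'a \<Rightarrow> 'b"
    and G :: "nat \<Rightarrow> 'b \<Rightarrow> real^'n::finite \<Rightarrow> real^'n" and T :: nat
    and Df :: "real^'n \<Rightarrow> real^'n" and sel :: "real^'n \<Rightarrow> real^'n"
  assumes prob: "prob_space M"
    and T: "1 \<le> T"
    and xi_meas: "\<And>t. t < T \<Longrightarrow> \<xi> t \<in> measurable M (S t)"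
    and indep: "prob_space.indep_vars M S \<xi> {..<T}"
    and G_meas: "\<And>t. t < T \<Longrightarrow> (\<lambda>(s, x). G t s x) \<in> borel_measurable (S t \<Otimes>\<^sub>M borel)"
    and unbiased_int: "\<And>t x. t < T \<Longrightarrow> integrable M (\<lambda>\<omega>. G t (\<xi> t \<omega>) x)"
    and unbiased: "\<And>t x. t < T \<Longrightarrow> (\<integral>\<omega>. G t (\<xi> t \<omega>) x \<partial>M) = Df x"
    and sel_meas: "sel \<in> borel_measurable borel"
begin

lemma Df_meas: "Df \<in> borel_measurable borel"
proof -
  interpret prob_space M by (rule prob)
  have T0: "0 < T" using T by simp
  have 1: "(\<lambda>p. (\<xi> 0 (snd p), fst p)) \<in> measurable (borel \<Otimes>\<^sub>M M) (S 0 \<Otimes>\<^sub>M borel)"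
    by (intro measurable_Pair measurable_compose[OF measurable_snd xi_meas[OF T0]] measurable_fst)
  have "(\<lambda>p. (\<lambda>(s, x). G 0 s x) (\<xi> 0 (snd p), fst p)) \<in> borel_measurable (borel \<Otimes>\<^sub>M M)"
    by (rule measurable_compose[OF 1 G_meas[OF T0]])
  then have "case_prod (\<lambda>x \<omega>. G 0 (\<xi> 0 \<omega>) x) \<in> borel_measurable (borel \<Otimes>\<^sub>M M)"
    by (simp add: case_prod_beta')
  then have "(\<lambda>x. \<integral>\<omega>. G 0 (\<xi> 0 \<omega>) x \<partial>M) \<in> borel_measurable borel"
    by (rule borel_measurable_lebesgue_integral)
  moreover have "(\<lambda>x. \<integral>\<omega>. G 0 (\<xi> 0 \<omega>) x \<partial>M) = Df" using unbiased[OF T0] by auto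
  ultimately show ?thesis by simp
qed

lemma meas_G:
  assumes "t < T" "t \<in> I" "X \<in> borel_measurable (PiM I S)"
  shows "(\<lambda>z. G t (z t) (X z)) \<in> borel_measurable (PiM I S)"
proof -
  have 1: "(\<lambda>z. (z t, X z)) \<in> measurable (PiM I S) (S t \<Otimes>\<^sub>M borel)"
    using assms by (intro measurable_Pair measurable_component_singleton) auto
  show ?thesis using measurable_compose[OF 1 G_meas[OF assms(1)]] by simp
qed

lemma meas_nsdm:
  assumes "\<And>s. s \<le> k \<Longrightarrow> s \<in> I \<and> s < T"
  shows "(\<lambda>z. fst (nsdm \<alpha> \<eta> sel (gh G z) x0 k)) \<in> borel_measurable (PiM I S)
       \<and> (\<lambda>z. snd (nsdm \<alpha> \<eta> sel (gh G z) x0 k)) \<in> borel_measurable (PiM I S)"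
  using assms
proof (induction k)
  case 0
  then show ?case using meas_G[of 0 I "\<lambda>z. x0"] by (simp add: gh_def)
next
  case (Suc k)
  then have IH1: "(\<lambda>z. fst (nsdm \<alpha> \<eta> sel (gh G z) x0 k)) \<in> borel_measurable (PiM I S)"
    and IH2: "(\<lambda>z. snd (nsdm \<alpha> \<eta> sel (gh G z) x0 k)) \<in> borel_measurable (PiM I S)" by auto
  have sm: "(\<lambda>z. sel (snd (nsdm \<alpha> \<eta> sel (gh G z) x0 k))) \<in> borel_measurable (PiM I S)"
    using measurable_compose[OF IH2 sel_meas] by simp
  have f1: "(\<lambda>z. fst (nsdm \<alpha> \<eta> sel (gh G z) x0 (Suc k))) \<in> borel_measurable (PiM I S)"
    unfolding nsdm_Suc_fst using IH1 sm by measurable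
  have g1: "(\<lambda>z. G (Suc k) (z (Suc k)) (fst (nsdm \<alpha> \<eta> sel (gh G z) x0 (Suc k)))) \<in> borel_measurable (PiM I S)"
    using Suc.prems[of "Suc k"] by (intro meas_G f1) auto
  have "(\<lambda>z. snd (nsdm \<alpha> \<eta> sel (gh G z) x0 (Suc k))) \<in> borel_measurable (PiM I S)"
    unfolding nsdm_Suc_snd using IH2 g1 by (simp add: gh_def) measurable
  with f1 show ?case by simp
qed

lemma meas_fst_Suc:
  assumes "\<And>s. s \<le> k \<Longrightarrow> s \<in> I \<and> s < T"
  shows "(\<lambda>z. fst (nsdm \<alpha> \<eta> sel (gh G z) x0 (Suc k))) \<in> borel_measurable (PiM I S)"
proof -
  have IH1: "(\<lambda>z. fst (nsdm \<alpha> \<eta> sel (gh G z) x0 k)) \<in> borel_measurable (PiM I S)"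
    and IH2: "(\<lambda>z. snd (nsdm \<alpha> \<eta> sel (gh G z) x0 k)) \<in> borel_measurable (PiM I S)"
    using meas_nsdm[OF assms] by auto
  have sm: "(\<lambda>z. sel (snd (nsdm \<alpha> \<eta> sel (gh G z) x0 k))) \<in> borel_measurable (PiM I S)"
    using measurable_compose[OF IH2 sel_meas] by simp
  show ?thesis unfolding nsdm_Suc_fst using IH1 sm by measurable
qed

lemma meas_noise:
  assumes "\<And>s. s \<le> k \<Longrightarrow> s \<in> I \<and> s < T"
  shows "(\<lambda>z. noise \<alpha> \<eta> sel Df (gh G z) x0 k) \<in> borel_measurable (PiM I S)"
  using assms
proof (induction k)
  case 0
  have "(\<lambda>z. G 0 (z 0) x0) \<in> borel_measurable (PiM I S)" using 0 meas_G[of 0 I "\<lambda>z. x0"] by auto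
  then show ?case by (simp add: gh_def)
next
  case (Suc k)
  then have IH: "(\<lambda>z. noise \<alpha> \<eta> sel Df (gh G z) x0 k) \<in> borel_measurable (PiM I S)" by auto
  have f1: "(\<lambda>z. fst (nsdm \<alpha> \<eta> sel (gh G z) x0 (Suc k))) \<in> borel_measurable (PiM I S)"
    using Suc.prems by (intro meas_fst_Suc) auto
  have g1: "(\<lambda>z. G (Suc k) (z (Suc k)) (fst (nsdm \<alpha> \<eta> sel (gh G z) x0 (Suc k)))) \<in> borel_measurable (PiM I S)"
    using Suc.prems[of "Suc k"] by (intro meas_G f1) auto
  have d1: "(\<lambda>z. Df (fst (nsdm \<alpha> \<eta> sel (gh G z) x0 (Suc k)))) \<in> borel_measurable (PiM I S)"
    using measurable_compose[OF f1 Df_meas] by simp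
  show ?case using IH g1 d1 by (simp add: gh_def) measurable
qed

lemma Y_meas: "k \<le> T \<Longrightarrow> (\<lambda>\<omega>. \<lambda>i\<in>{..<k}. \<xi> i \<omega>) \<in> measurable M (PiM {..<k} S)"
  by (intro measurable_restrict xi_meas) auto

lemma noise_Y: "t < k \<Longrightarrow> noise \<alpha> \<eta> sel Df (\<lambda>s x. G s (\<xi> s \<omega>) x) x0 t
   = noise \<alpha> \<eta> sel Df (gh G (\<lambda>i\<in>{..<k}. \<xi> i \<omega>)) x0 t"
  by (rule noise_local) (auto simp: gh_def)

lemma fst_Y: "j < k \<Longrightarrow> fst (nsdm \<alpha> \<eta> sel (\<lambda>s x. G s (\<xi> s \<omega>) x) x0 (Suc j))
   = fst (nsdm \<alpha> \<eta> sel (gh G (\<lambda>i\<in>{..<k}. \<xi> i \<omega>)) x0 (Suc j))"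
  by (rule nsdm_local_fst) (auto simp: gh_def)

lemma noise_meas: "t < T \<Longrightarrow> (\<lambda>\<omega>. noise \<alpha> \<eta> sel Df (\<lambda>s x. G s (\<xi> s \<omega>) x) x0 t) \<in> borel_measurable M"
proof -
  assume t: "t < T"
  have "(\<lambda>z. noise \<alpha> \<eta> sel Df (gh G z) x0 t) \<in> borel_measurable (PiM {..<Suc t} S)"
    using t by (intro meas_noise) auto
  from measurable_compose[OF Y_meas this] t
  have "(\<lambda>\<omega>. noise \<alpha> \<eta> sel Df (gh G (\<lambda>i\<in>{..<Suc t}. \<xi> i \<omega>)) x0 t) \<in> borel_measurable M" by simp
  then show ?thesis by (subst noise_Y[of t "Suc t"]) auto
qed


lemma rec_bound:
  fixes A :: "real^'n^'n" and V :: real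
  assumes Qnn: "\<And>v. 0 \<le> v \<bullet> (A *v v)" and V0: "0 \<le> V" and alpha: "0 \<le> \<alpha>" "\<alpha> \<le> 1"
    and var: "\<And>t x. t < T \<Longrightarrow> (\<integral>\<^sup>+\<omega>. ennreal ((G t (\<xi> t \<omega>) x - Df x) \<bullet> (A *v (G t (\<xi> t \<omega>) x - Df x))) \<partial>M) \<le> ennreal V"
  shows "t < T \<Longrightarrow> (\<integral>\<^sup>+\<omega>. ennreal (noise \<alpha> \<eta> sel Df (\<lambda>s x. G s (\<xi> s \<omega>) x) x0 t \<bullet>
            (A *v noise \<alpha> \<eta> sel Df (\<lambda>s x. G s (\<xi> s \<omega>) x) x0 t)) \<partial>M) \<le> ennreal (V * ((1-\<alpha>)^(2*t) + \<alpha>))"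
proof (induction t)
  case 0
  have "(\<integral>\<^sup>+\<omega>. ennreal (noise \<alpha> \<eta> sel Df (\<lambda>s x. G s (\<xi> s \<omega>) x) x0 0 \<bullet>
            (A *v noise \<alpha> \<eta> sel Df (\<lambda>s x. G s (\<xi> s \<omega>) x) x0 0)) \<partial>M) \<le> ennreal V"
    using var[OF 0, of x0] by simp
  also have "ennreal V \<le> ennreal (V * ((1-\<alpha>)^(2*0) + \<alpha>))" using V0 alpha by (intro ennreal_leI) (simp add: distrib_left)
  finally show ?case .
next
  case (Suc j)
  interpret prob_space M by (rule prob)
  define t where "t = Suc j"
  have tT: "t < T" and jT: "j < T" using Suc.prems by (auto simp: t_def)
  define Q where "Q v = v \<bullet> (A *v v)" for v
  define PY where "PY = PiM {..<t} S"
  define Y where "Y \<omega> = (\<lambda>i\<in>{..<t}. \<xi> i \<omega>)" for \<omega>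
  define Nz where "Nz z = noise \<alpha> \<eta> sel Df (gh G z) x0 j" for z
  define Xz where "Xz z = fst (nsdm \<alpha> \<eta> sel (gh G z) x0 (Suc j))" for z
  define \<Phi> where "\<Phi> p = ennreal (Q ((1-\<alpha>) *\<^sub>R Nz (fst p) + \<alpha> *\<^sub>R (G t (snd p) (Xz (fst p)) - Df (Xz (fst p)))))" for p
  define gw where "gw \<omega> = (\<lambda>s x. G s (\<xi> s \<omega>) x)" for \<omega>
  have Ym: "Y \<in> measurable M PY" unfolding Y_def PY_def using tT by (intro Y_meas) simp
  have xm: "\<xi> t \<in> measurable M (S t)" by (rule xi_meas[OF tT])
  have Nzm: "Nz \<in> borel_measurable PY" unfolding Nz_def PY_def using tT by (intro meas_noise) (auto simp: t_def)
  have Xzm: "Xz \<in> borel_measurable PY" unfolding Xz_def PY_def using tT by (intro meas_fst_Suc) (auto simp: t_def)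
  have \<Phi>m: "\<Phi> \<in> borel_measurable (PY \<Otimes>\<^sub>M S t)"
  proof -
    have 1: "(\<lambda>p. (snd p, Xz (fst p))) \<in> measurable (PY \<Otimes>\<^sub>M S t) (S t \<Otimes>\<^sub>M borel)"
      by (intro measurable_Pair measurable_snd measurable_compose[OF measurable_fst Xzm])
    have 2: "(\<lambda>p. G t (snd p) (Xz (fst p))) \<in> borel_measurable (PY \<Otimes>\<^sub>M S t)"
      using measurable_compose[OF 1 G_meas[OF tT]] by simp
    have 3: "(\<lambda>p. Df (Xz (fst p))) \<in> borel_measurable (PY \<Otimes>\<^sub>M S t)"
      using measurable_compose[OF measurable_compose[OF measurable_fst Xzm] Df_meas] by blast
    have 4: "(\<lambda>p. Nz (fst p)) \<in> borel_measurable (PY \<Otimes>\<^sub>M S t)"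
      using measurable_compose[OF measurable_fst Nzm] by blast
    have 5: "(\<lambda>p. (1-\<alpha>) *\<^sub>R Nz (fst p) + \<alpha> *\<^sub>R (G t (snd p) (Xz (fst p)) - Df (Xz (fst p)))) \<in> borel_measurable (PY \<Otimes>\<^sub>M S t)"
      using 2 3 4 by measurable
    have "(\<lambda>p. Q ((1-\<alpha>) *\<^sub>R Nz (fst p) + \<alpha> *\<^sub>R (G t (snd p) (Xz (fst p)) - Df (Xz (fst p))))) \<in> borel_measurable (PY \<Otimes>\<^sub>M S t)"
      unfolding Q_def by (rule meas_quad[OF 5])
    then show ?thesis unfolding \<Phi>_def by (rule measurable_compose[OF _ measurable_ennreal])
  qed
  have pw: "ennreal (Q (noise \<alpha> \<eta> sel Df (gw \<omega>) x0 t)) = \<Phi> (Y \<omega>, \<xi> t \<omega>)" for \<omega>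
  proof -
    have "noise \<alpha> \<eta> sel Df (gw \<omega>) x0 t = (1-\<alpha>) *\<^sub>R noise \<alpha> \<eta> sel Df (gw \<omega>) x0 j
        + \<alpha> *\<^sub>R (G t (\<xi> t \<omega>) (fst (nsdm \<alpha> \<eta> sel (gw \<omega>) x0 (Suc j))) - Df (fst (nsdm \<alpha> \<eta> sel (gw \<omega>) x0 (Suc j))))"
      by (simp add: t_def gw_def)
    also have "noise \<alpha> \<eta> sel Df (gw \<omega>) x0 j = Nz (Y \<omega>)"
      unfolding gw_def Nz_def Y_def by (rule noise_Y) (simp add: t_def)
    also have "fst (nsdm \<alpha> \<eta> sel (gw \<omega>) x0 (Suc j)) = Xz (Y \<omega>)"
      unfolding gw_def Xz_def Y_def by (rule fst_Y) (simp add: t_def)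
    finally show ?thesis by (simp add: \<Phi>_def)
  qed
  define PT where "PT = PiM {t} S"
  define Y2 where "Y2 \<omega> = (\<lambda>i\<in>{t}. \<xi> i \<omega>)" for \<omega>
  define \<Phi>2 where "\<Phi>2 p = \<Phi> (fst p, snd p t)" for p
  have Y2m: "Y2 \<in> measurable M PT" unfolding Y2_def PT_def using tT by (intro measurable_restrict xi_meas) auto
  have \<Phi>2m: "\<Phi>2 \<in> borel_measurable (PY \<Otimes>\<^sub>M PT)"
  proof -
    have "(\<lambda>p. (fst p, snd p t)) \<in> measurable (PY \<Otimes>\<^sub>M PT) (PY \<Otimes>\<^sub>M S t)"
      unfolding PT_def by (intro measurable_Pair measurable_fst measurable_compose[OF measurable_snd measurable_component_singleton]) auto
    from measurable_compose[OF this \<Phi>m] have "(\<lambda>p. \<Phi> (fst p, snd p t)) \<in> borel_measurable (PY \<Otimes>\<^sub>M PT)" by simp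
    moreover have "\<Phi>2 = (\<lambda>p. \<Phi> (fst p, snd p t))" by (simp add: fun_eq_iff \<Phi>2_def)
    ultimately show ?thesis by simp
  qed
  have pw2: "\<Phi> (Y \<omega>, \<xi> t \<omega>) = \<Phi>2 (Y \<omega>, Y2 \<omega>)" for \<omega> by (simp add: \<Phi>2_def Y2_def)
  have ind: "indep_var PY Y PT Y2"
    unfolding PY_def Y_def PT_def Y2_def using indep tT by (intro indep_var_restrict) auto
  interpret P1: prob_space "distr M PY Y" using Ym by (rule prob_space_distr)
  interpret P2: prob_space "distr M PT Y2" using Y2m by (rule prob_space_distr)
  have joint: "distr M PY Y \<Otimes>\<^sub>M distr M PT Y2 = distr M (PY \<Otimes>\<^sub>M PT) (\<lambda>\<omega>. (Y \<omega>, Y2 \<omega>))"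
    using ind by (simp add: indep_var_distribution_eq)
  have \<Phi>m': "\<Phi>2 \<in> borel_measurable (distr M PY Y \<Otimes>\<^sub>M distr M PT Y2)"
    using \<Phi>2m by (subst measurable_cong_sets[OF sets_pair_measure_cong[OF sets_distr sets_distr] refl])
  have "(\<integral>\<^sup>+\<omega>. ennreal (Q (noise \<alpha> \<eta> sel Df (gw \<omega>) x0 t)) \<partial>M) = (\<integral>\<^sup>+\<omega>. \<Phi>2 (Y \<omega>, Y2 \<omega>) \<partial>M)"
    by (simp add: pw pw2)
  also have "\<dots> = (\<integral>\<^sup>+p. \<Phi>2 p \<partial>(distr M (PY \<Otimes>\<^sub>M PT) (\<lambda>\<omega>. (Y \<omega>, Y2 \<omega>))))"
    using \<Phi>2m Ym Y2m by (subst nn_integral_distr) (auto intro: measurable_Pair)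
  also have "\<dots> = (\<integral>\<^sup>+p. \<Phi>2 p \<partial>(distr M PY Y \<Otimes>\<^sub>M distr M PT Y2))" by (simp add: joint)
  also have "\<dots> = (\<integral>\<^sup>+z. \<integral>\<^sup>+s. \<Phi>2 (z, s) \<partial>distr M PT Y2 \<partial>distr M PY Y)"
    by (rule P2.nn_integral_fst[OF \<Phi>m', symmetric])
  also have "\<dots> \<le> (\<integral>\<^sup>+z. ennreal (Q ((1-\<alpha>) *\<^sub>R Nz z) + \<alpha>^2 * V) \<partial>distr M PY Y)"
  proof (rule nn_integral_mono)
    fix z assume z: "z \<in> space (distr M PY Y)"
    then have zP: "z \<in> space PY" by simp
    have "(\<integral>\<^sup>+s. \<Phi>2 (z, s) \<partial>distr M PT Y2) = (\<integral>\<^sup>+\<omega>. \<Phi>2 (z, Y2 \<omega>) \<partial>M)"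
      using Y2m measurable_Pair2[OF \<Phi>2m zP] by (subst nn_integral_distr) auto
    also have "\<dots> = (\<integral>\<^sup>+\<omega>. \<Phi> (z, \<xi> t \<omega>) \<partial>M)" by (simp add: \<Phi>2_def Y2_def)
    also have "\<dots> = (\<integral>\<^sup>+\<omega>. ennreal (Q ((1-\<alpha>) *\<^sub>R Nz z + \<alpha> *\<^sub>R (G t (\<xi> t \<omega>) (Xz z) - Df (Xz z)))) \<partial>M)"
      by (simp add: \<Phi>_def)
    also have "\<dots> \<le> ennreal (Q ((1-\<alpha>) *\<^sub>R Nz z) + \<alpha>^2 * V)"
      unfolding Q_def
    proof (rule inner_step[OF prob])
      show "integrable M (\<lambda>\<omega>. G t (\<xi> t \<omega>) (Xz z) - Df (Xz z))"
        using unbiased_int[OF tT] by (intro Bochner_Integration.integrable_diff integrable_const)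
      show "integral\<^sup>L M (\<lambda>\<omega>. G t (\<xi> t \<omega>) (Xz z) - Df (Xz z)) = 0"
        using unbiased_int[OF tT] unbiased[OF tT] by (simp add: prob_space)
      show "\<And>v. 0 \<le> v \<bullet> (A *v v)" by (rule Qnn)
      show "(\<integral>\<^sup>+\<omega>. ennreal ((G t (\<xi> t \<omega>) (Xz z) - Df (Xz z)) \<bullet> (A *v (G t (\<xi> t \<omega>) (Xz z) - Df (Xz z)))) \<partial>M) \<le> ennreal V"
        by (rule var[OF tT])
      show "0 \<le> V" by (rule V0)
    qed
    finally show "(\<integral>\<^sup>+s. \<Phi>2 (z, s) \<partial>distr M PT Y2) \<le> ennreal (Q ((1-\<alpha>) *\<^sub>R Nz z) + \<alpha>^2 * V)" .
  qed
  also have "\<dots> = (\<integral>\<^sup>+\<omega>. ennreal (Q ((1-\<alpha>) *\<^sub>R Nz (Y \<omega>)) + \<alpha>^2 * V) \<partial>M)"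
  proof (rule nn_integral_distr[OF Ym])
    have "(\<lambda>z. Q ((1-\<alpha>) *\<^sub>R Nz z)) \<in> borel_measurable PY"
      unfolding Q_def by (rule meas_quad) (use Nzm in measurable)
    then have "(\<lambda>z. ennreal (Q ((1-\<alpha>) *\<^sub>R Nz z) + \<alpha>^2 * V)) \<in> borel_measurable PY" by measurable
    then show "(\<lambda>z. ennreal (Q ((1-\<alpha>) *\<^sub>R Nz z) + \<alpha>^2 * V)) \<in> borel_measurable (distr M PY Y)" by simp
  qed
  also have "\<dots> = (\<integral>\<^sup>+\<omega>. ennreal ((1-\<alpha>)^2) * ennreal (Q (noise \<alpha> \<eta> sel Df (gw \<omega>) x0 j)) + ennreal (\<alpha>^2 * V) \<partial>M)"
  proof (rule nn_integral_cong)
    fix \<omega>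
    have e: "Nz (Y \<omega>) = noise \<alpha> \<eta> sel Df (gw \<omega>) x0 j"
      unfolding gw_def Nz_def Y_def by (rule noise_Y[symmetric]) (simp add: t_def)
    have "Q ((1-\<alpha>) *\<^sub>R v) = (1-\<alpha>)^2 * Q v" for v
      by (simp add: Q_def matrix_vector_mult_scaleR power2_eq_square)
    then show "ennreal (Q ((1-\<alpha>) *\<^sub>R Nz (Y \<omega>)) + \<alpha>^2 * V) = ennreal ((1-\<alpha>)^2) * ennreal (Q (noise \<alpha> \<eta> sel Df (gw \<omega>) x0 j)) + ennreal (\<alpha>^2 * V)"
      using Qnn V0 by (simp add: e Q_def ennreal_mult[symmetric] ennreal_plus[symmetric] del: ennreal_plus)
  qed
  also have "\<dots> = ennreal ((1-\<alpha>)^2) * (\<integral>\<^sup>+\<omega>. ennreal (Q (noise \<alpha> \<eta> sel Df (gw \<omega>) x0 j)) \<partial>M) + ennreal (\<alpha>^2 * V)"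
  proof -
    have "(\<lambda>\<omega>. Q (noise \<alpha> \<eta> sel Df (gw \<omega>) x0 j)) \<in> borel_measurable M"
      unfolding Q_def gw_def by (rule meas_quad[OF noise_meas[OF jT]])
    then show ?thesis by (subst nn_integral_add) (auto simp: nn_integral_cmult emeasure_space_1)
  qed
  also have "\<dots> \<le> ennreal ((1-\<alpha>)^2) * ennreal (V * ((1-\<alpha>)^(2*j) + \<alpha>)) + ennreal (\<alpha>^2 * V)"
    using Suc.IH jT by (intro add_mono mult_left_mono) (auto simp: Q_def gw_def)
  also have "\<dots> = ennreal ((1-\<alpha>)^2 * (V * ((1-\<alpha>)^(2*j) + \<alpha>)) + \<alpha>^2 * V)"
    using V0 alpha by (simp add: ennreal_mult[symmetric] ennreal_plus[symmetric] del: ennreal_plus)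
  also have "\<dots> \<le> ennreal (V * ((1-\<alpha>)^(2*Suc j) + \<alpha>))"
  proof (rule ennreal_leI)
    have "(1-\<alpha>)^2 * \<alpha> + \<alpha>^2 \<le> \<alpha>"
    proof -
      have "(1-\<alpha>)^2 * \<alpha> + \<alpha>^2 = \<alpha> - \<alpha>^2 * (1 - \<alpha>)" by (simp add: power2_eq_square algebra_simps)
      moreover have "0 \<le> \<alpha>^2 * (1 - \<alpha>)" using alpha by simp
      ultimately show ?thesis by linarith
    qed
    then have "V * ((1-\<alpha>)^2 * \<alpha> + \<alpha>^2) \<le> V * \<alpha>" using V0 by (rule mult_left_mono)
    moreover have "(1-\<alpha>)^(2*Suc j) = (1-\<alpha>)^2 * (1-\<alpha>)^(2*j)" by (simp add: power_add[symmetric])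
    ultimately show "(1-\<alpha>)^2 * (V * ((1-\<alpha>)^(2*j) + \<alpha>)) + \<alpha>^2 * V \<le> V * ((1-\<alpha>)^(2*Suc j) + \<alpha>)"
      by (simp add: algebra_simps)
  qed
  finally show ?case by (simp add: Q_def gw_def t_def)
qed

end

lemma ennreal_aff:
  assumes "0 \<le> a" "0 \<le> b" "\<And>t. t \<in> I \<Longrightarrow> 0 \<le> w t"
  shows "ennreal (a + b * (\<Sum>t\<in>I. w t)) = ennreal a + ennreal b * (\<Sum>t\<in>I. ennreal (w t))"
proof -
  have s0: "0 \<le> (\<Sum>t\<in>I. w t)" using assms(3) by (simp add: sum_nonneg)
  have "ennreal (a + b * (\<Sum>t\<in>I. w t)) = ennreal a + ennreal (b * (\<Sum>t\<in>I. w t))"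
    using assms s0 by (intro ennreal_plus) auto
  also have "ennreal (b * (\<Sum>t\<in>I. w t)) = ennreal b * ennreal (\<Sum>t\<in>I. w t)"
    using assms s0 by (intro ennreal_mult) auto
  also have "ennreal (\<Sum>t\<in>I. w t) = (\<Sum>t\<in>I. ennreal (w t))" using assms(3) by simp
  finally show ?thesis .
qed

theorem theorem4p2:
  fixes Hs :: "(real^'n::finite^'n) set"
    and \<alpha> \<eta> \<sigma> :: real and T :: nat
    and f :: "real^'n \<Rightarrow> real" and Df :: "real^'n \<Rightarrow> real^'n" and x0 :: "real^'n"
    and M :: "'a measure" and S :: "nat \<Rightarrow> 'b measure" and \<xi> :: "nat \<Rightarrow> 'a \<Rightarrow> 'b"
    and F :: "nat \<Rightarrow> 'b \<Rightarrow> real^'n \<Rightarrow> real" and G :: "nat \<Rightarrow> 'b \<Rightarrow> real^'n \<Rightarrow> real^'n"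
    and sel :: "real^'n \<Rightarrow> real^'n"
  assumes ws: "well_structured Hs"
    and alpha: "0 < \<alpha>" "\<alpha> < 1"
    and eta: "0 < \<eta>"
    and T: "1 \<le> T"
    and f_grad: "\<And>x. (f has_derivative (\<lambda>h. Df x \<bullet> h)) (at x)"
    and f_bdd: "bdd_below (range f)"
    and f_smooth: "lip_set Hs Df \<noteq> {}"
    and prob: "prob_space M"
    and xi_meas: "\<And>t. t < T \<Longrightarrow> \<xi> t \<in> measurable M (S t)"
    and indep: "prob_space.indep_vars M S \<xi> {..<T}"
    and F_grad: "\<And>t s x. t < T \<Longrightarrow> s \<in> space (S t) \<Longrightarrow>
                   (F t s has_derivative (\<lambda>h. G t s x \<bullet> h)) (at x)"
    and G_meas: "\<And>t. t < T \<Longrightarrow> (\<lambda>(s, x). G t s x) \<in> borel_measurable (S t \<Otimes>\<^sub>M borel)"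
    and unbiased_int: "\<And>t x. t < T \<Longrightarrow> integrable M (\<lambda>\<omega>. G t (\<xi> t \<omega>) x)"
    and unbiased: "\<And>t x. t < T \<Longrightarrow> (\<integral>\<omega>. G t (\<xi> t \<omega>) x \<partial>M) = Df x"
    and sigma: "0 \<le> \<sigma>"
    and var: "adaptive_var2 M Hs T (\<lambda>t x \<omega>. G t (\<xi> t \<omega>) x) \<le> ennreal (\<sigma>\<^sup>2)"
    and sel: "is_argmax_sel (normH Hs) sel"
    and sel_meas: "sel \<in> borel_measurable borel"
  shows "(\<integral>\<^sup>+ \<omega>. ennreal ((1 / real T) *
            (\<Sum>t<T. dualH Hs (Df (fst (nsdm \<alpha> \<eta> sel (\<lambda>t x. G t (\<xi> t \<omega>) x) x0 t))))) \<partial>M)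
         \<le> ennreal ((f x0 - Inf (range f)) / (\<eta> * real T)
                    + 2 * \<eta> / \<alpha> * lip_const Hs Df
                    + 2 * \<sigma> / (\<alpha> * real T)
                    + 2 * \<sigma> * sqrt \<alpha>)"
proof -
  interpret prob_space M by (rule prob)
  define L where "L = lip_const Hs Df"
  have Lin: "L \<in> lip_set Hs Df" unfolding L_def by (rule lip_const_in[OF ws f_smooth])
  have L0: "0 \<le> L" unfolding L_def by (rule lip_const_nonneg[OF ws f_smooth])
  define A0 where "A0 = (f x0 - Inf (range f)) / (\<eta> * real T) + 2 * \<eta> / \<alpha> * L"
  have Tp: "0 < real T" using T by simp
  have A0nn: "0 \<le> A0"
  proof -
    have "Inf (range f) \<le> f x0" using f_bdd by (simp add: cInf_lower)
    then show ?thesis unfolding A0_def using eta Tp alpha L0 by (intro add_nonneg_nonneg) auto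
  qed
  define K where "K = 2 / (\<alpha> * real T) + 2 * sqrt \<alpha>"
  have Kp: "0 < K" unfolding K_def using alpha Tp by (intro add_pos_pos) auto
  define LHS where "LHS = (\<integral>\<^sup>+ \<omega>. ennreal ((1 / real T) *
            (\<Sum>t<T. dualH Hs (Df (fst (nsdm \<alpha> \<eta> sel (\<lambda>t x. G t (\<xi> t \<omega>) x) x0 t))))) \<partial>M)"
  have claim: "LHS \<le> ennreal (A0 + \<sigma>' * K)" if s': "\<sigma> < \<sigma>'" for \<sigma>'
  proof -
    have s'p: "0 < \<sigma>'" using s' sigma by simp
    have "adaptive_var2 M Hs T (\<lambda>t x \<omega>. G t (\<xi> t \<omega>) x) < ennreal (\<sigma>'^2)"
    proof -
      have "\<sigma>^2 < \<sigma>'^2" using s' sigma by (intro power_strict_mono) auto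
      then have "ennreal (\<sigma>^2) < ennreal (\<sigma>'^2)" using s'p by (intro ennreal_lessI) auto
      with var show ?thesis by simp
    qed
    then obtain H where H: "H \<in> Hs" "pd_mat H" "trace H \<le> 1"
      and Hsup: "(SUP tx \<in> {..<T} \<times> UNIV.
          \<integral>\<^sup>+ \<omega>. ennreal ((mnorm (matrix_inv H) (G (fst tx) (\<xi> (fst tx) \<omega>) (snd tx) - (\<integral>\<omega>'. G (fst tx) (\<xi> (fst tx) \<omega>') (snd tx) \<partial>M)))\<^sup>2) \<partial>M) < ennreal (\<sigma>'^2)"
      unfolding adaptive_var2_def INF_less_iff by auto
    define A where "A = matrix_inv H"
    have Qnn: "0 \<le> v \<bullet> (A *v v)" for v
      unfolding A_def using key_inv(2)[OF ws H, of 0 v] normH_zero[OF ws] by simp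
    have varb: "(\<integral>\<^sup>+\<omega>. ennreal ((G t (\<xi> t \<omega>) x - Df x) \<bullet> (A *v (G t (\<xi> t \<omega>) x - Df x))) \<partial>M) \<le> ennreal (\<sigma>'^2)"
      if tT: "t < T" for t x
    proof -
      have "(\<integral>\<^sup>+\<omega>. ennreal ((G t (\<xi> t \<omega>) x - Df x) \<bullet> (A *v (G t (\<xi> t \<omega>) x - Df x))) \<partial>M)
          = (\<integral>\<^sup>+ \<omega>. ennreal ((mnorm (matrix_inv H) (G (fst (t,x)) (\<xi> (fst (t,x)) \<omega>) (snd (t,x)) - (\<integral>\<omega>'. G (fst (t,x)) (\<xi> (fst (t,x)) \<omega>') (snd (t,x)) \<partial>M)))\<^sup>2) \<partial>M)"
        using unbiased[OF tT, of x] Qnn by (simp add: mnorm_def A_def)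
      also have "\<dots> \<le> (SUP tx \<in> {..<T} \<times> UNIV.
          \<integral>\<^sup>+ \<omega>. ennreal ((mnorm (matrix_inv H) (G (fst tx) (\<xi> (fst tx) \<omega>) (snd tx) - (\<integral>\<omega>'. G (fst tx) (\<xi> (fst tx) \<omega>') (snd tx) \<partial>M)))\<^sup>2) \<partial>M)"
        using tT by (intro SUP_upper) auto
      also have "\<dots> \<le> ennreal (\<sigma>'^2)" using Hsup by simp
      finally show ?thesis .
    qed
    define N where "N t \<omega> = noise \<alpha> \<eta> sel Df (\<lambda>s x. G s (\<xi> s \<omega>) x) x0 t" for t \<omega>
    define W where "W t \<omega> = mnorm A (N t \<omega>)" for t \<omega>
    have rb: "(\<integral>\<^sup>+\<omega>. ennreal (N t \<omega> \<bullet> (A *v N t \<omega>)) \<partial>M) \<le> ennreal (\<sigma>'^2 * ((1-\<alpha>)^(2*t) + \<alpha>))"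
      if "t < T" for t
      unfolding N_def
      by (rule rec_bound[OF prob T xi_meas indep G_meas unbiased_int unbiased sel_meas Qnn _ _ _ varb])
         (use alpha that in auto)
    have Wm: "W t \<in> borel_measurable M" if "t < T" for t
      unfolding W_def[abs_def] N_def
      by (rule meas_mnorm[OF noise_meas[OF prob T xi_meas indep G_meas unbiased_int unbiased sel_meas that]])
    have W0: "0 \<le> W t \<omega>" for t \<omega> unfolding W_def mnorm_def using Qnn by simp
    have EW: "(\<integral>\<^sup>+\<omega>. ennreal (W t \<omega>) \<partial>M) \<le> ennreal (\<sigma>' * ((1-\<alpha>)^t + sqrt \<alpha>))" if tT: "t < T" for t
    proof -
      define c where "c = \<sigma>' * sqrt ((1-\<alpha>)^(2*t) + \<alpha>)"
      have cp: "0 < c" unfolding c_def using s'p alpha by (intro mult_pos_pos) (auto intro: add_nonneg_pos)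
      have "(\<integral>\<^sup>+\<omega>. ennreal (W t \<omega>) \<partial>M) \<le> ennreal c"
      proof (rule nn_sqrt_bound[OF prob Wm[OF tT] W0 cp])
        have "(\<integral>\<^sup>+\<omega>. ennreal ((W t \<omega>)^2) \<partial>M) = (\<integral>\<^sup>+\<omega>. ennreal (N t \<omega> \<bullet> (A *v N t \<omega>)) \<partial>M)"
          using Qnn by (simp add: W_def mnorm_def)
        also have "\<dots> \<le> ennreal (\<sigma>'^2 * ((1-\<alpha>)^(2*t) + \<alpha>))" by (rule rb[OF tT])
        also have "\<sigma>'^2 * ((1-\<alpha>)^(2*t) + \<alpha>) = c^2"
          unfolding c_def using alpha by (simp add: power_mult_distrib)
        finally show "(\<integral>\<^sup>+\<omega>. ennreal ((W t \<omega>)^2) \<partial>M) \<le> ennreal (c^2)" .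
      qed
      also have "c \<le> \<sigma>' * ((1-\<alpha>)^t + sqrt \<alpha>)"
      proof -
        have "sqrt ((1-\<alpha>)^(2*t) + \<alpha>) \<le> sqrt ((1-\<alpha>)^(2*t)) + sqrt \<alpha>"
          using alpha by (intro sqrt_add_le_add_sqrt) auto
        also have "sqrt ((1-\<alpha>)^(2*t)) = (1-\<alpha>)^t"
        proof -
          have "(1-\<alpha>)^(2*t) = ((1-\<alpha>)^t)^2" by (simp add: power_mult[symmetric] mult.commute)
          then show ?thesis using alpha by simp
        qed
        finally show ?thesis unfolding c_def using s'p by (intro mult_left_mono) auto
      qed
      then have "ennreal c \<le> ennreal (\<sigma>' * ((1-\<alpha>)^t + sqrt \<alpha>))" by (rule ennreal_leI)
      finally show ?thesis .
    qed
    have pw: "(1 / real T) * (\<Sum>t<T. dualH Hs (Df (fst (nsdm \<alpha> \<eta> sel (\<lambda>t x. G t (\<xi> t \<omega>) x) x0 t))))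
        \<le> A0 + (2 / real T) * (\<Sum>t<T. W t \<omega>)" for \<omega>
      unfolding A0_def W_def N_def A_def
      by (rule pathwise[OF ws alpha eta f_grad f_bdd Lin L0 sel H T])
    have "LHS \<le> (\<integral>\<^sup>+\<omega>. ennreal A0 + ennreal (2 / real T) * (\<Sum>t<T. ennreal (W t \<omega>)) \<partial>M)"
      unfolding LHS_def
    proof (rule nn_integral_mono)
      fix \<omega>
      have "ennreal ((1 / real T) * (\<Sum>t<T. dualH Hs (Df (fst (nsdm \<alpha> \<eta> sel (\<lambda>t x. G t (\<xi> t \<omega>) x) x0 t)))))
          \<le> ennreal (A0 + (2 / real T) * (\<Sum>t<T. W t \<omega>))" by (rule ennreal_leI[OF pw])
      also have "\<dots> = ennreal A0 + ennreal (2 / real T) * (\<Sum>t<T. ennreal (W t \<omega>))"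
        using A0nn W0 Tp by (intro ennreal_aff) auto
      finally show "ennreal ((1 / real T) * (\<Sum>t<T. dualH Hs (Df (fst (nsdm \<alpha> \<eta> sel (\<lambda>t x. G t (\<xi> t \<omega>) x) x0 t)))))
          \<le> ennreal A0 + ennreal (2 / real T) * (\<Sum>t<T. ennreal (W t \<omega>))" .
    qed
    also have "\<dots> = ennreal A0 + ennreal (2 / real T) * (\<Sum>t<T. \<integral>\<^sup>+\<omega>. ennreal (W t \<omega>) \<partial>M)"
    proof -
      have m: "(\<lambda>\<omega>. ennreal (W t \<omega>)) \<in> borel_measurable M" if "t \<in> {..<T}" for t
        using Wm[of t] that by (auto intro: measurable_compose[OF _ measurable_ennreal])
      have "(\<lambda>\<omega>. \<Sum>t<T. ennreal (W t \<omega>)) \<in> borel_measurable M" using m by (intro borel_measurable_sum) auto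
      moreover have "(\<integral>\<^sup>+\<omega>. (\<Sum>t<T. ennreal (W t \<omega>)) \<partial>M) = (\<Sum>t<T. \<integral>\<^sup>+\<omega>. ennreal (W t \<omega>) \<partial>M)"
        using nn_integral_sum[of "{..<T}" "\<lambda>t \<omega>. ennreal (W t \<omega>)" M] m by simp
      ultimately show ?thesis
        by (simp add: nn_integral_add nn_integral_cmult emeasure_space_1)
    qed
    also have "\<dots> \<le> ennreal A0 + ennreal (2 / real T) * (\<Sum>t<T. ennreal (\<sigma>' * ((1-\<alpha>)^t + sqrt \<alpha>)))"
      by (intro add_mono mult_left_mono sum_mono EW) auto
    also have "\<dots> = ennreal (A0 + (2 / real T) * (\<Sum>t<T. \<sigma>' * ((1-\<alpha>)^t + sqrt \<alpha>)))"
    proof -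
      have "0 \<le> \<sigma>' * ((1-\<alpha>)^t + sqrt \<alpha>)" for t using s'p alpha by simp
      then show ?thesis using A0nn Tp by (intro ennreal_aff[symmetric]) auto
    qed
    also have "\<dots> \<le> ennreal (A0 + \<sigma>' * K)"
    proof (rule ennreal_leI)
      have g: "(\<Sum>t<T. (1-\<alpha>)^t) \<le> 1 / \<alpha>"
      proof -
        have "(\<Sum>t<T. (1-\<alpha>)^t) = (1 - (1-\<alpha>)^T) / \<alpha>" using alpha by (simp add: sum_gp_strict)
        also have "\<dots> \<le> 1 / \<alpha>" using alpha by (intro divide_right_mono) auto
        finally show ?thesis .
      qed
      have "(\<Sum>t<T. \<sigma>' * ((1-\<alpha>)^t + sqrt \<alpha>)) = \<sigma>' * (\<Sum>t<T. (1-\<alpha>)^t) + \<sigma>' * real T * sqrt \<alpha>"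
        by (simp add: sum_distrib_left sum.distrib algebra_simps)
      also have "\<dots> \<le> \<sigma>' * (1 / \<alpha>) + \<sigma>' * real T * sqrt \<alpha>" using g s'p by (intro add_mono mult_left_mono) auto
      finally have "(2 / real T) * (\<Sum>t<T. \<sigma>' * ((1-\<alpha>)^t + sqrt \<alpha>)) \<le> (2 / real T) * (\<sigma>' * (1 / \<alpha>) + \<sigma>' * real T * sqrt \<alpha>)"
        using Tp by (intro mult_left_mono) auto
      also have "\<dots> = \<sigma>' * K" unfolding K_def using Tp alpha by (simp add: field_simps)
      finally show "A0 + (2 / real T) * (\<Sum>t<T. \<sigma>' * ((1-\<alpha>)^t + sqrt \<alpha>)) \<le> A0 + \<sigma>' * K" by simp
    qed
    finally show ?thesis .
  qed
  have "LHS \<le> ennreal (A0 + \<sigma> * K)"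
  proof (rule ennreal_le_epsilon)
    fix e :: real assume e: "0 < e"
    have "LHS \<le> ennreal (A0 + (\<sigma> + e / K) * K)" using e Kp by (intro claim) auto
    also have "A0 + (\<sigma> + e / K) * K = (A0 + \<sigma> * K) + e" using Kp by (simp add: field_simps)
    also have "ennreal (A0 + \<sigma> * K + e) = ennreal (A0 + \<sigma> * K) + ennreal e"
      using A0nn sigma Kp e by (intro ennreal_plus) auto
    finally show "LHS \<le> ennreal (A0 + \<sigma> * K) + ennreal e" .
  qed
  also have "A0 + \<sigma> * K = (f x0 - Inf (range f)) / (\<eta> * real T) + 2 * \<eta> / \<alpha> * lip_const Hs Df
                    + 2 * \<sigma> / (\<alpha> * real T) + 2 * \<sigma> * sqrt \<alpha>"
    unfolding A0_def K_def L_def by (simp add: algebra_simps)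
  finally show ?thesis unfolding LHS_def .
qed

end
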